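(* Let $\mathbf a=\{a_1,\dots,a_A\}$, $\mathbf b=\{b_1,\dots,b_B\}$, $\mathbf c=\{c_1,\dots,c_C\}$, $\mathbf d=\{d_1,\dots,d_D\}$ be lists of complex numbers ($A,B,C,D\in\mathbb N_0$, not all zero), $z=e^{i\psi}$, $w=e^{i\eta}$, $\sigma,\tau\in(0,\infty)$, $t\in\mathbb C\setminus\{0\}$, such that for all $i,j,k,l$: $|b_j|<|d_l|<\min\{\tau/|t|,1/\sigma\}$, $|d_la_i|<1/|t|$, and $|a_i|<|c_k|<\min\{\sigma/|t|,1/\tau\}$. Then $$\int_{-\pi}^{\pi}\frac{(\mathbf b\frac\sigma z,t\mathbf a\frac z\sigma;q)_\infty}{(\mathbf d\frac\sigma z,t\mathbf c\frac z\sigma;q)_\infty}d\psi=\int_{-\pi}^{\pi}\frac{(\mathbf a\frac\tau w,t\mathbf b\frac w\tau;q)_\infty}{(\mathbf c\frac\tau w,t\mathbf d\frac w\tau;q)_\infty}d\eta.$$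
   Context: $q\in\mathbb C$, $0<|q|<1$; $(a;q)_\infty=\prod_{j\ge0}(1-aq^j)$; for a list $\mathbf u$ and scalar $y$, $(\mathbf u y;q)_\infty=\prod_i(u_iy;q)_\infty$, and several entries separated by commas denote the product. *)

theory Defs
  imports "HOL-Analysis.Analysis"
begin

definition qpoch_inf :: "complex \<Rightarrow> complex \<Rightarrow> complex" where
  "qpoch_inf a q = (\<Prod>j. (1 - a * q ^ j))"

definition qpoch_list :: "complex list \<Rightarrow> complex \<Rightarrow> complex \<Rightarrow> complex" where
  "qpoch_list us y q = prod_list (map (\<lambda>u. qpoch_inf (u * y) q) us)"

end

theory Submission imports Defs "HOL-Complex_Analysis.Complex_Analysis" begin


lemma qpoch_conv:
  fixes q x :: complex assumes q: "norm q < 1"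
  shows "convergent_prod (\<lambda>j. 1 - x * q ^ j)"
proof -
  have "summable (\<lambda>j. norm ((1 - x * q ^ j) - 1))"
    using q by (simp add: norm_mult norm_power summable_geometric)
  then show ?thesis
    using abs_convergent_prod_conv_summable abs_convergent_prod_imp_convergent_prod by blast
qed

lemma qpoch_nz:
  fixes q x :: complex assumes q: "norm q < 1" and x: "norm x < 1"
  shows "qpoch_inf x q \<noteq> 0"
  unfolding qpoch_inf_def
proof (rule prodinf_nonzero[OF qpoch_conv[OF q]])
  fix j
  have "norm (x * q ^ j) \<le> norm x"
    using q by (simp add: norm_mult norm_power mult_left_le power_le_one)
  then have "norm (x * q ^ j) < 1" using x by linarith
  then show "1 - x * q ^ j \<noteq> 0" by auto
qed

lemma qpoch_holo:
  fixes q :: complex assumes q: "norm q < 1"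
  shows "(\<lambda>x. qpoch_inf x q) holomorphic_on S"
proof (rule holomorphic_on_subset)
  define P where "P = (\<lambda>N x. \<Prod>n<N. (1 - x * q ^ n))"
  have ul: "uniform_limit (cball 0 R) P (\<lambda>x. qpoch_inf x q) sequentially" if R: "R > 0" for R
  proof -
    have "uniformly_convergent_on (cball 0 R) P"
      unfolding P_def
    proof (rule uniformly_convergent_on_prod')
      show "uniformly_convergent_on (cball 0 R) (\<lambda>N x. \<Sum>n<N. norm ((1 - x * q ^ n) - 1))"
      proof (rule Weierstrass_m_test')
        fix n and x :: complex assume "x \<in> cball 0 R"
        then have "norm x \<le> R" by simp
        then show "norm (norm ((1 - x * q ^ n) - 1)) \<le> R * norm q ^ n"
          by (simp add: norm_mult norm_power mult_right_mono)
      next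
        show "summable (\<lambda>n. R * norm q ^ n)"
          using q by (intro summable_mult summable_geometric) simp
      qed
    qed (auto intro!: continuous_intros)
    then obtain g where g: "uniform_limit (cball 0 R) P g sequentially"
      by (auto simp: uniformly_convergent_on_def)
    also have "?this \<longleftrightarrow> uniform_limit (cball 0 R) P (\<lambda>x. qpoch_inf x q) sequentially"
    proof (intro uniform_limit_cong)
      fix z :: complex assume "z \<in> cball 0 R"
      with g have "(\<lambda>n. P (Suc n) z) \<longlonglongrightarrow> g z"
        by (metis tendsto_uniform_limitI filterlim_sequentially_Suc)
      moreover have "(\<lambda>n. P (Suc n) z) \<longlonglongrightarrow> qpoch_inf z q"
        using convergent_prod_LIMSEQ[OF qpoch_conv[OF q, of z]] unfolding P_def lessThan_Suc_atMost
        by (simp add: qpoch_inf_def)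
      ultimately show "g z = qpoch_inf z q"
        using tendsto_unique by force
    qed auto
    finally show ?thesis .
  qed
  show "(\<lambda>x. qpoch_inf x q) holomorphic_on UNIV"
  proof (rule holomorphic_uniform_sequence[where f = P])
    fix z :: complex
    have *: "uniform_limit (cball 0 (norm z + 1)) P (\<lambda>x. qpoch_inf x q) sequentially"
      by (rule ul) (auto intro: add_nonneg_pos)
    hence "uniform_limit (cball z 1) P (\<lambda>x. qpoch_inf x q) sequentially"
      by (rule uniform_limit_on_subset) (simp add: cball_subset_cball_iff)
    thus "\<exists>d>0. cball z d \<subseteq> UNIV \<and> uniform_limit (cball z d) P (\<lambda>x. qpoch_inf x q) sequentially"
      by (intro exI[of _ 1]) auto
  qed (auto intro!: holomorphic_intros simp: P_def)
qed auto



lemma exp_shift_2pi: "exp (\<i> * of_real (c + pi)) = exp (\<i> * of_real (c - pi))"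
proof -
  have "\<i> * of_real (c + pi) = \<i> * of_real (c - pi) + 2 * of_real pi * \<i>"
    by (simp add: algebra_simps)
  then show ?thesis by (simp add: exp_add)
qed

lemma loop_aux: "exp (\<i> * of_real (linepath (c - pi) (c + pi) 1)) = exp (\<i> * of_real (linepath (c - pi) (c + pi) 0))"
proof -
  have "linepath (c - pi) (c + pi) 1 = c + pi" "linepath (c-pi) (c+pi) 0 = c - pi"
    by (simp_all add: linepath_def)
  then show ?thesis by (simp only: exp_shift_2pi)
qed

lemma hom_circles:
  assumes r1: "r1 > 0" and r2: "r2 > 0"
    and S: "\<And>u. min r1 r2 \<le> norm u \<Longrightarrow> norm u \<le> max r1 r2 \<Longrightarrow> u \<in> S"
  shows "homotopic_loops S (part_circlepath 0 r1 (a - pi) (a + pi)) (part_circlepath 0 r2 (b - pi) (b + pi))"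
  unfolding homotopic_loops
proof (intro exI conjI)
  define h where "h = (\<lambda>(x::real, s::real). of_real (r1 + x*(r2-r1)) * exp (\<i> * of_real (linepath (a + x*(b-a) - pi) (a + x*(b-a) + pi) s)))"
  show "continuous_on ({0..1} \<times> {0..1}) h"
    unfolding h_def linepath_def by (auto intro!: continuous_intros simp: case_prod_unfold)
  show "h \<in> {0..1} \<times> {0..1} \<rightarrow> S"
  proof
    fix p assume p: "p \<in> {0..1::real} \<times> {0..1::real}"
    obtain x s where ps: "p = (x, s)" by force
    with p have x: "0 \<le> x" "x \<le> 1" by auto
    have n: "norm (h p) = \<bar>r1 + x*(r2-r1)\<bar>"
    proof -
      have "h p = of_real (r1 + x*(r2-r1)) * exp (\<i> * of_real (linepath (a + x*(b-a) - pi) (a + x*(b-a) + pi) s))"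
        unfolding h_def ps by (simp only: case_prod_conv)
      then show ?thesis by (simp only: norm_mult norm_exp_i_times norm_of_real mult_1_right)
    qed
    have lo: "min r1 r2 \<le> r1 + x*(r2-r1)" and hi: "r1 + x*(r2-r1) \<le> max r1 r2"
    proof -
      have e: "r1 + x*(r2-r1) = (1-x)*r1 + x*r2" by (simp add: algebra_simps)
      have "(1-x)*min r1 r2 + x*min r1 r2 \<le> (1-x)*r1 + x*r2"
        by (intro add_mono mult_left_mono) (use x in auto)
      then show "min r1 r2 \<le> r1 + x*(r2-r1)" unfolding e by (simp add: algebra_simps)
      have "(1-x)*r1 + x*r2 \<le> (1-x)*max r1 r2 + x*max r1 r2"
        by (intro add_mono mult_left_mono) (use x in auto)
      then show "r1 + x*(r2-r1) \<le> max r1 r2" unfolding e by (simp add: algebra_simps)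
    qed
    have "0 \<le> r1 + x*(r2-r1)" using lo r1 r2 by linarith
    then show "h p \<in> S" using S lo hi n by simp
  qed
  show "\<forall>x\<in>{0..1}. h (0, x) = part_circlepath 0 r1 (a - pi) (a + pi) x"
    by (simp add: h_def part_circlepath_def)
  show "\<forall>x\<in>{0..1}. h (1, x) = part_circlepath 0 r2 (b - pi) (b + pi) x"
    by (simp add: h_def part_circlepath_def)
  show "\<forall>t\<in>{0..1}. pathfinish (h \<circ> Pair t) = pathstart (h \<circ> Pair t)"
    by (simp add: h_def pathfinish_def pathstart_def loop_aux)
qed

lemma circle_integral_eq:
  fixes F :: "complex \<Rightarrow> complex"
  assumes hol: "F holomorphic_on S" and os: "open S" and r1: "r1 > 0" and r2: "r2 > 0"
    and S: "\<And>u. min r1 r2 \<le> norm u \<Longrightarrow> norm u \<le> max r1 r2 \<Longrightarrow> u \<in> S"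
  shows "integral {a-pi..a+pi} (\<lambda>\<psi>. F (of_real r1 * cis \<psi>)) = integral {b-pi..b+pi} (\<lambda>\<psi>. F (of_real r2 * cis \<psi>))"
proof -
  have S0: "0 \<notin> S \<Longrightarrow> True" by simp
  define S' where "S' = S - {0}"
  have os': "open S'" unfolding S'_def using os by (simp add: open_delete)
  have hol': "(\<lambda>u. F u / u) holomorphic_on S'"
    unfolding S'_def by (intro holomorphic_intros holomorphic_on_subset[OF hol]) auto
  have S': "u \<in> S'" if "min r1 r2 \<le> norm u" "norm u \<le> max r1 r2" for u
    using S[OF that] that r1 r2 unfolding S'_def by auto
  let ?g1 = "part_circlepath 0 r1 (a - pi) (a + pi)"
  let ?g2 = "part_circlepath 0 r2 (b - pi) (b + pi)"
  have hom: "homotopic_loops S' ?g1 ?g2" by (rule hom_circles[OF r1 r2 S'])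
  have eq: "contour_integral ?g1 (\<lambda>u. F u / u) = contour_integral ?g2 (\<lambda>u. F u / u)"
    by (rule Cauchy_theorem_homotopic_loops[OF hom os' hol']) auto
  have img: "path_image (part_circlepath 0 r (c - pi) (c + pi)) \<subseteq> S'" if "r = r1 \<or> r = r2" for r c
  proof
    fix u assume "u \<in> path_image (part_circlepath 0 r (c - pi) (c + pi))"
    moreover have "path_image (part_circlepath 0 r (c - pi) (c + pi)) \<subseteq> sphere 0 r"
      by (rule path_image_part_circlepath_subset) (use that r1 r2 in auto)
    ultimately have "u \<in> sphere 0 r" by blast
    then have "norm u = r" by simp
    then show "u \<in> S'" using that by (intro S') auto
  qed
  have key: "((\<lambda>\<psi>. F (of_real r * cis \<psi>)) has_integral contour_integral (part_circlepath 0 r (c - pi) (c + pi)) (\<lambda>u. F u / u) / \<i>) {c-pi..c+pi}"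
    if "r = r1 \<or> r = r2" for r c
  proof -
    have rpos: "r > 0" using that r1 r2 by auto
    have "(\<lambda>u. F u / u) contour_integrable_on (part_circlepath 0 r (c - pi) (c + pi))"
      by (rule contour_integrable_holomorphic_simple[OF hol' os']) (use img[OF that] in auto)
    then have "((\<lambda>u. F u / u) has_contour_integral contour_integral (part_circlepath 0 r (c - pi) (c + pi)) (\<lambda>u. F u / u)) (part_circlepath 0 r (c - pi) (c + pi))"
      by (rule has_contour_integral_integral)
    then have "((\<lambda>t. F (0 + r * cis t) / (0 + r * cis t) * r * \<i> * cis t) has_integral contour_integral (part_circlepath 0 r (c - pi) (c + pi)) (\<lambda>u. F u / u)) {c-pi..c+pi}"
      by (subst (asm) has_contour_integral_part_circlepath_iff) auto
    then have "((\<lambda>t. \<i> * F (of_real r * cis t)) has_integral contour_integral (part_circlepath 0 r (c - pi) (c + pi)) (\<lambda>u. F u / u)) {c-pi..c+pi}"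
      by (rule has_integral_eq[rotated]) (use rpos in \<open>simp add: field_simps\<close>)
    from has_integral_mult_right[OF this, of "1/\<i>"] show ?thesis by simp
  qed
  show ?thesis
    using key[of r1 a] key[of r2 b] eq by (simp add: integral_unique)
qed


lemma qpoch_list_holo:
  assumes q: "norm q < 1" and g: "g holomorphic_on S"
  shows "(\<lambda>u. qpoch_list us (g u) q) holomorphic_on S"
proof (induction us)
  case Nil then show ?case by (simp add: qpoch_list_def)
next
  case (Cons a us)
  have "(\<lambda>u. qpoch_inf (a * g u) q) holomorphic_on S"
    using holomorphic_on_compose[OF holomorphic_on_mult[OF holomorphic_on_const g] qpoch_holo[OF q]]
    by (simp add: o_def)
  with Cons show ?case by (simp add: qpoch_list_def holomorphic_on_mult)
qed

lemma qpoch_list_nz: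
  assumes q: "norm q < 1" and y: "\<forall>u\<in>set us. norm (u * y) < 1"
  shows "qpoch_list us y q \<noteq> 0"
  using y qpoch_nz[OF q] by (auto simp: qpoch_list_def prod_list_zero_iff)



theorem lemma2p13:
  fixes as bs cs ds :: "complex list" and q t :: complex and \<sigma> \<tau> :: real
  assumes q: "0 < norm q" "norm q < 1"
    and nonempty: "as \<noteq> [] \<or> bs \<noteq> [] \<or> cs \<noteq> [] \<or> ds \<noteq> []"
    and \<sigma>: "\<sigma> > 0" and \<tau>: "\<tau> > 0" and t: "t \<noteq> 0"
    and bd: "\<forall>b\<in>set bs. \<forall>d\<in>set ds. norm b < norm d"
    and d: "\<forall>d\<in>set ds. norm d < min (\<tau> / norm t) (1 / \<sigma>)"
    and da: "\<forall>d\<in>set ds. \<forall>a\<in>set as. norm (d * a) < 1 / norm t"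
    and ac: "\<forall>a\<in>set as. \<forall>c\<in>set cs. norm a < norm c"
    and c: "\<forall>c\<in>set cs. norm c < min (\<sigma> / norm t) (1 / \<tau>)"
  shows "integral {-pi..pi} (\<lambda>\<psi>. let z = exp (\<i> * of_real \<psi>) in
            (qpoch_list bs (of_real \<sigma> / z) q * qpoch_list as (t * z / of_real \<sigma>) q) /
            (qpoch_list ds (of_real \<sigma> / z) q * qpoch_list cs (t * z / of_real \<sigma>) q))
       = integral {-pi..pi} (\<lambda>\<eta>. let w = exp (\<i> * of_real \<eta>) in
            (qpoch_list as (of_real \<tau> / w) q * qpoch_list bs (t * w / of_real \<tau>) q) /
            (qpoch_list cs (of_real \<tau> / w) q * qpoch_list ds (t * w / of_real \<tau>) q))"
  
proof -
  define F where "F = (\<lambda>u. (qpoch_list bs (1/u) q * qpoch_list as (t*u) q) /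
            (qpoch_list ds (1/u) q * qpoch_list cs (t*u) q))"
  define S where "S = {u::complex. u \<noteq> 0 \<and> (\<forall>d\<in>set ds. norm d < norm u) \<and> (\<forall>c\<in>set cs. norm t * norm c * norm u < 1)}"
  have Seq: "S = (-{0}) \<inter> (\<Inter>d\<in>set ds. {u. norm d < norm u}) \<inter> (\<Inter>c\<in>set cs. {u. norm t * norm c * norm u < 1})"
    unfolding S_def by auto
  have os: "open S" unfolding Seq
    by (intro open_Int open_Compl closed_singleton open_INT finite_set ballI open_Collect_less continuous_intros)
  have hol: "F holomorphic_on S"
    unfolding F_def
  proof (intro holomorphic_intros qpoch_list_holo q)
    fix u assume u: "u \<in> S"
    have "qpoch_list ds (1/u) q \<noteq> 0"
    proof (rule qpoch_list_nz[OF q(2)], intro ballI)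
      fix d assume "d \<in> set ds"
      then have "norm d < norm u" "u \<noteq> 0" using u by (auto simp: S_def)
      then show "norm (d * (1/u)) < 1" by (simp add: norm_divide divide_less_eq)
    qed
    moreover have "qpoch_list cs (t*u) q \<noteq> 0"
    proof (rule qpoch_list_nz[OF q(2)], intro ballI)
      fix c assume "c \<in> set cs"
      then have "norm t * norm c * norm u < 1" using u by (auto simp: S_def)
      then show "norm (c * (t*u)) < 1" by (simp add: norm_mult mult_ac)
    qed
    ultimately show "qpoch_list ds (1/u) q * qpoch_list cs (t*u) q \<noteq> 0" by simp
  qed (auto simp: S_def)
  define r1 where "r1 = 1 / \<sigma>"
  define r2 where "r2 = \<tau> / norm t"
  have r1: "r1 > 0" using \<sigma> by (simp add: r1_def)
  have r2: "r2 > 0" using \<tau> t by (simp add: r2_def)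
  have inS: "u \<in> S" if u1: "min r1 r2 \<le> norm u" and u2: "norm u \<le> max r1 r2" for u
  proof -
    have "u \<noteq> 0" using u1 r1 r2 by auto
    moreover have "norm d < norm u" if "d \<in> set ds" for d
    proof -
      have "norm d < r1" "norm d < r2" using d that by (auto simp: r1_def r2_def)
      then show ?thesis using u1 by linarith
    qed
    moreover have "norm t * norm c * norm u < 1" if "c \<in> set cs" for c
    proof -
      have c1: "norm c < \<sigma> / norm t" and c2: "norm c < 1 / \<tau>" using c that by auto
      have nt: "norm t > 0" using t by simp
      have "norm t * norm c * r1 < 1"
        using c1 nt \<sigma> by (simp add: r1_def field_simps)
      moreover have "norm t * norm c * r2 < 1"
        using c2 nt \<tau> by (simp add: r2_def field_simps)
      ultimately have "norm t * norm c * max r1 r2 < 1" by (simp add: max_def)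
      moreover have "norm t * norm c * norm u \<le> norm t * norm c * max r1 r2"
        using u2 by (intro mult_left_mono) auto
      ultimately show ?thesis by linarith
    qed
    ultimately show ?thesis by (simp add: S_def)
  qed
  define \<theta> where "\<theta> = - Arg t"
  have circ: "integral {0-pi..0+pi} (\<lambda>\<psi>. F (of_real r1 * cis \<psi>)) = integral {\<theta>-pi..\<theta>+pi} (\<lambda>\<psi>. F (of_real r2 * cis \<psi>))"
    by (rule circle_integral_eq[OF hol os r1 r2 inS])
  have L: "integral {-pi..pi} (\<lambda>\<psi>. let z = exp (\<i> * of_real \<psi>) in
            (qpoch_list bs (of_real \<sigma> / z) q * qpoch_list as (t * z / of_real \<sigma>) q) /
            (qpoch_list ds (of_real \<sigma> / z) q * qpoch_list cs (t * z / of_real \<sigma>) q))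
      = integral {0-pi..0+pi} (\<lambda>\<psi>. F (of_real r1 * cis \<psi>))"
  proof -
    have "(let z = exp (\<i> * of_real \<psi>) in
            (qpoch_list bs (of_real \<sigma> / z) q * qpoch_list as (t * z / of_real \<sigma>) q) /
            (qpoch_list ds (of_real \<sigma> / z) q * qpoch_list cs (t * z / of_real \<sigma>) q)) = F (of_real r1 * cis \<psi>)" for \<psi>
    proof -
      have e1: "of_real \<sigma> / exp (\<i> * of_real \<psi>) = 1 / (of_real r1 * cis \<psi>)"
        using \<sigma> by (simp add: r1_def cis_conv_exp field_simps)
      have e2: "t * exp (\<i> * of_real \<psi>) / of_real \<sigma> = t * (of_real r1 * cis \<psi>)"
        using \<sigma> by (simp add: r1_def cis_conv_exp field_simps)
      show ?thesis unfolding Let_def e1 e2 F_def ..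
    qed
    then show ?thesis by simp
  qed
  have R: "integral {-pi..pi} (\<lambda>\<eta>. let w = exp (\<i> * of_real \<eta>) in
            (qpoch_list as (of_real \<tau> / w) q * qpoch_list bs (t * w / of_real \<tau>) q) /
            (qpoch_list cs (of_real \<tau> / w) q * qpoch_list ds (t * w / of_real \<tau>) q))
      = integral {-pi..pi} (\<lambda>\<eta>. F (of_real r2 * cis (\<theta> + - \<eta>)))"
  proof -
    have "(let w = exp (\<i> * of_real \<eta>) in
            (qpoch_list as (of_real \<tau> / w) q * qpoch_list bs (t * w / of_real \<tau>) q) /
            (qpoch_list cs (of_real \<tau> / w) q * qpoch_list ds (t * w / of_real \<tau>) q)) = F (of_real r2 * cis (\<theta> + - \<eta>))" for \<eta>
    proof -
      define w where "w = exp (\<i> * of_real \<eta>)"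
      have w: "w = cis \<eta>" by (simp add: w_def cis_conv_exp)
      have tt: "t = of_real (norm t) * cis (Arg t)"
        using rcis_cmod_Arg[of t] by (simp add: rcis_def)
      have nt: "norm t \<noteq> 0" using t by simp
      have u: "of_real r2 * cis (\<theta> + - \<eta>) = of_real \<tau> / (t * w)"
      proof -
        have "of_real r2 * cis (\<theta> + - \<eta>) * (t * w) = of_real \<tau>"
        proof -
          have "of_real r2 * cis (\<theta> + - \<eta>) * (t * w) = of_real (r2 * norm t) * (cis (\<theta> + - \<eta>) * cis (Arg t) * cis \<eta>)"
            by (subst tt) (simp add: w mult_ac)
          also have "cis (\<theta> + - \<eta>) * cis (Arg t) * cis \<eta> = 1"
            by (simp add: cis_mult \<theta>_def)
          finally show ?thesis using nt by (simp add: r2_def)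
        qed
        moreover have "t * w \<noteq> 0" using t by (simp add: w_def)
        ultimately show ?thesis by (simp add: field_simps)
      qed
      have e1: "1 / (of_real \<tau> / (t * w)) = t * w / of_real \<tau>" by simp
      have e2: "t * (of_real \<tau> / (t * w)) = of_real \<tau> / w" using t by simp
      show ?thesis unfolding Let_def u F_def w_def[symmetric] e1 e2 by (simp add: mult_ac)
    qed
    then show ?thesis by simp
  qed
  have R2: "integral {-pi..pi} (\<lambda>\<eta>. F (of_real r2 * cis (\<theta> + - \<eta>))) = integral {\<theta>-pi..\<theta>+pi} (\<lambda>\<psi>. F (of_real r2 * cis \<psi>))"
  proof -
    have "integral {-pi..pi} (\<lambda>\<eta>. F (of_real r2 * cis (\<theta> + - \<eta>))) = integral {- pi..pi} (\<lambda>x. F (of_real r2 * cis (\<theta> + x)))"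
      using Henstock_Kurzweil_Integration.integral_reflect_real[of pi "-pi" "\<lambda>x. F (of_real r2 * cis (\<theta> + x))"] by simp
    also have "\<dots> = integral {- pi..pi} ((\<lambda>\<psi>. F (of_real r2 * cis \<psi>)) \<circ> (+) \<theta>)"
      by (simp add: o_def add.commute)
    also have "\<dots> = integral {-pi+\<theta>..pi+\<theta>} (\<lambda>\<psi>. F (of_real r2 * cis \<psi>))"
      by (rule integral_shift_Icc_real)
    also have "{-pi+\<theta>..pi+\<theta>} = {\<theta>-pi..\<theta>+pi}" by (simp add: algebra_simps)
    finally show ?thesis .
  qed
  show ?thesis using L R R2 circ by simp
qed

end
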